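(* For the Diverse Population-Based EA on the weighted vertex cover problem with $n$ vertices, the search point $0^n$ is included in the population in expected time $O(n^2\log n)$.
   Context: Weighted vertex cover: $G=(V,E)$, $V=\{v_1,\dots,v_n\}$, $w:V\to\mathbb{N}^+$. Search points $x\in\{0,1\}^n$; $|x|_1$ is the number of ones. $Cost(x)=\sum_i w(v_i)x_i$; $G(x)=(V(x),E(x))$ with $V(x)=V\setminus\{v_i:x_i=1\}$, $E(x)$ = edges with no selected endpoint; $LP(x)$ = optimal value of: minimize $\sum_{v_i\in V(x)}w(v_i)y_i$ s.t. $y_i+y_j\ge1$ for $\{v_i,v_j\}\in E(x)$, $0\le y_i\le1$. Alternative mutation operator on $x$: choose $b\in\{0,1\}$ uniformly; if $b=1$, flip each $x_i$ with probability $1/2$ if $v_i$ is incident to an edge of $E(x)$ and with probability $1/n$ otherwise; if $b=0$, flip each bit independently with probability $1/n$. Diverse Population-Based EA: start with uniformly random $x$, $P=\{x\}$. Each iteration: choose $x\in P$ uniformly; create $x'$ by the alternative mutation operator; add $x'$ to $P$; let $P'=\{y\in P:|y|_1=|x'|_1\}$; let $y_{min_1}\in P'$ minimize $Cost(z)+LP(z)$ and $y_{min_2}\in P'$ minimize $Cost(z)+2LP(z)$ over $P'$; set $P\leftarrow(P\setminus P')\cup\{y_{min_1},y_{min_2}\}$. Time = number of iterations. *)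

theory Defs
  imports "HOL-Probability.Probability"
begin

text \<open>Vertices are 0..<n; a search point is a function nat => bool that is False
  outside {..<n} (bit i = x_i). Edges E are 2-element subsets of {..<n}.\<close>

type_synonym spoint = "nat \<Rightarrow> bool"

definition wvc_graph :: "nat \<Rightarrow> nat set set \<Rightarrow> (nat \<Rightarrow> nat) \<Rightarrow> bool" where
  "wvc_graph n E w \<longleftrightarrow>
     (\<forall>e\<in>E. \<exists>i j. e = {i, j} \<and> i \<noteq> j \<and> i < n \<and> j < n) \<and> (\<forall>i<n. w i > 0)"

definition ones :: "nat \<Rightarrow> spoint \<Rightarrow> nat" where
  "ones n x = card {i. i < n \<and> x i}"

definition cost :: "nat \<Rightarrow> (nat \<Rightarrow> nat) \<Rightarrow> spoint \<Rightarrow> real" where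
  "cost n w x = (\<Sum>i | i < n \<and> x i. real (w i))"

definition Vx :: "nat \<Rightarrow> spoint \<Rightarrow> nat set" where
  "Vx n x = {i. i < n \<and> \<not> x i}"

definition Ex :: "nat set set \<Rightarrow> spoint \<Rightarrow> nat set set" where
  "Ex E x = {e \<in> E. \<forall>i\<in>e. \<not> x i}"

text \<open>Optimal value of the LP relaxation on the residual graph G(x).\<close>
definition LP :: "nat \<Rightarrow> nat set set \<Rightarrow> (nat \<Rightarrow> nat) \<Rightarrow> spoint \<Rightarrow> real" where
  "LP n E w x = Inf {(\<Sum>i\<in>Vx n x. real (w i) * y i) | y :: nat \<Rightarrow> real.
       (\<forall>i\<in>Vx n x. 0 \<le> y i \<and> y i \<le> 1) \<and>
       (\<forall>i j. {i, j} \<in> Ex E x \<longrightarrow> i \<noteq> j \<longrightarrow> y i + y j \<ge> 1)}"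

definition mutate :: "nat \<Rightarrow> nat set set \<Rightarrow> spoint \<Rightarrow> spoint pmf" where
  "mutate n E x = do {
     b \<leftarrow> bernoulli_pmf (1/2);
     c \<leftarrow> Pi_pmf {..<n} False
            (\<lambda>i. bernoulli_pmf (if b \<and> (\<exists>e\<in>Ex E x. i \<in> e) then 1/2 else 1 / real n));
     return_pmf (\<lambda>i. x i \<noteq> c i) }"

text \<open>Tie-breaking rules: sel1 / sel2 return a minimiser of Cost+LP / Cost+2LP.\<close>
definition is_selector :: "(spoint \<Rightarrow> real) \<Rightarrow> (spoint set \<Rightarrow> spoint) \<Rightarrow> bool" where
  "is_selector f sel \<longleftrightarrow>
     (\<forall>S. finite S \<and> S \<noteq> {} \<longrightarrow> sel S \<in> S \<and> (\<forall>z\<in>S. f (sel S) \<le> f z))"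

definition dpea_step :: "nat \<Rightarrow> nat set set \<Rightarrow> (spoint set \<Rightarrow> spoint) \<Rightarrow> (spoint set \<Rightarrow> spoint)
    \<Rightarrow> spoint set \<Rightarrow> spoint set pmf" where
  "dpea_step n E sel1 sel2 P = do {
     x \<leftarrow> pmf_of_set P;
     x' \<leftarrow> mutate n E x;
     let P1 = insert x' P;
     let P' = {y \<in> P1. ones n y = ones n x'};
     return_pmf ((P1 - P') \<union> {sel1 P', sel2 P'}) }"

definition zero_pt :: spoint where "zero_pt = (\<lambda>_. False)"

definition init_pt :: "nat \<Rightarrow> spoint pmf" where
  "init_pt n = Pi_pmf {..<n} False (\<lambda>_. bernoulli_pmf (1/2))"

text \<open>Distribution of the population after t iterations, for the chain stopped once 0^n
  is in the population (so "0^n not in P_t" is the event that the hitting time exceeds t).\<close>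
primrec dpea_pop :: "nat \<Rightarrow> nat set set \<Rightarrow> (spoint set \<Rightarrow> spoint) \<Rightarrow> (spoint set \<Rightarrow> spoint)
    \<Rightarrow> nat \<Rightarrow> spoint set pmf" where
  "dpea_pop n E sel1 sel2 0 = map_pmf (\<lambda>x. {x}) (init_pt n)"
| "dpea_pop n E sel1 sel2 (Suc t) = dpea_pop n E sel1 sel2 t \<bind>
     (\<lambda>P. if zero_pt \<in> P then return_pmf P else dpea_step n E sel1 sel2 P)"

text \<open>Expected hitting time of 0^n: sum over t of Pr[T > t].\<close>
definition expected_time_zero :: "nat \<Rightarrow> nat set set \<Rightarrow> (spoint set \<Rightarrow> spoint)
    \<Rightarrow> (spoint set \<Rightarrow> spoint) \<Rightarrow> ennreal" where
  "expected_time_zero n E sel1 sel2 =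
     (\<Sum>t. ennreal (measure_pmf.prob (dpea_pop n E sel1 sel2 t) {P. zero_pt \<notin> P}))"

end

theory Submission
  imports Defs
begin


lemma fitness_levels:
  fixes X :: "nat \<Rightarrow> 'a pmf" and K :: "'a \<Rightarrow> 'a pmf" and L :: "'a \<Rightarrow> nat" and p :: "nat \<Rightarrow> real"
  assumes XS: "\<And>t. X (Suc t) = X t \<bind> (\<lambda>s. if g s then return_pmf s else K s)"
  and I0: "\<And>s. s \<in> set_pmf (X 0) \<Longrightarrow> I s"
  and IK: "\<And>s s'. I s \<Longrightarrow> \<not> g s \<Longrightarrow> s' \<in> set_pmf (K s) \<Longrightarrow> I s' \<and> L s' \<le> L s"
  and LN: "\<And>s. I s \<Longrightarrow> L s \<le> N"
  and gL: "\<And>s. I s \<Longrightarrow> g s \<longleftrightarrow> L s = 0"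
  and prog: "\<And>s. I s \<Longrightarrow> \<not> g s \<Longrightarrow> p (L s) \<le> measure_pmf.prob (K s) {s'. L s' < L s}"
  and ppos: "\<And>k. 1 \<le> k \<Longrightarrow> k \<le> N \<Longrightarrow> p k > 0"
  shows "(\<Sum>t. ennreal (measure_pmf.prob (X t) {s. \<not> g s})) \<le> ennreal (\<Sum>k=1..N. 1 / p k)"
proof -
  define h where "h k = (\<Sum>j=1..min k N. 1 / p j)" for k
  define f where "f s = ennreal (h (L s))" for s
  define F where "F = (\<Sum>k=1..N. 1 / p k)"
  have hmono: "h k \<le> h k'" if "k \<le> k'" for k k'
    unfolding h_def using that ppos
    by (intro sum_mono2) (auto intro: less_imp_le)
  have hstep: "h k' + 1 / p k \<le> h k" if "1 \<le> k" "k \<le> N" "k' < k" for k k'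
  proof -
    have "h k = h (k - 1) + 1 / p k"
      unfolding h_def using that
      by (cases k) (auto simp: min_def)
    moreover have "h k' \<le> h (k - 1)" using hmono that by simp
    ultimately show ?thesis by simp
  qed
  have hF: "h k \<le> F" for k
  proof -
    have "h k \<le> h N" using hmono[of "min k N" N] unfolding h_def by (simp add: min_def)
    also have "h N = F" unfolding h_def F_def by simp
    finally show ?thesis .
  qed
  have Inv: "s \<in> set_pmf (X t) \<Longrightarrow> I s" for s t
  proof (induction t arbitrary: s)
    case 0 then show ?case using I0 by simp
  next
    case (Suc t)
    then obtain s0 where s0: "s0 \<in> set_pmf (X t)" "s \<in> set_pmf (if g s0 then return_pmf s0 else K s0)"
      by (auto simp: XS)
    then show ?case using Suc.IH IK by (auto split: if_splits)
  qed
  have drift: "(\<integral>\<^sup>+s'. f s' \<partial>(if g s then return_pmf s else K s)) + indicator {s. \<not> g s} s \<le> f s"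
    if Is: "I s" for s
  proof (cases "g s")
    case True then show ?thesis by simp
  next
    case False
    define k where "k = L s"
    have k1: "1 \<le> k" "k \<le> N" using gL[OF Is] LN[OF Is] False k_def by auto
    have pk: "p k > 0" using ppos k1 by simp
    have AE: "AE s' in K s. f s' + ennreal (1 / p k) * indicator {s'. L s' < k} s' \<le> ennreal (h k)"
    proof (rule AE_pmfI)
      fix s' assume s': "s' \<in> set_pmf (K s)"
      have le: "L s' \<le> k" using IK[OF Is False s'] k_def by simp
      show "f s' + ennreal (1 / p k) * indicator {s'. L s' < k} s' \<le> ennreal (h k)"
      proof (cases "L s' < k")
        case True
        have "h (L s') \<ge> 0" unfolding h_def using ppos by (intro sum_nonneg) (auto intro: less_imp_le)
        then show ?thesis using True hstep[OF k1 True] pk unfolding f_def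
          by (simp add: ennreal_plus[symmetric] ennreal_leI del: ennreal_plus)
      next
        case False
        then show ?thesis using hmono[OF le] unfolding f_def by (simp add: ennreal_leI)
      qed
    qed
    have "(\<integral>\<^sup>+s'. f s' \<partial>K s) + ennreal (1 / p k) * emeasure (K s) {s'. L s' < k}
        = (\<integral>\<^sup>+s'. f s' + ennreal (1 / p k) * indicator {s'. L s' < k} s' \<partial>K s)"
      by (subst nn_integral_add) (auto simp: nn_integral_cmult_indicator)
    also have "\<dots> \<le> (\<integral>\<^sup>+s'. ennreal (h k) \<partial>K s)"
      by (rule nn_integral_mono_AE[OF AE])
    also have "\<dots> = ennreal (h k)" by (simp add: measure_pmf.emeasure_space_1)
    finally have A: "(\<integral>\<^sup>+s'. f s' \<partial>K s) + ennreal (1 / p k) * emeasure (K s) {s'. L s' < k} \<le> ennreal (h k)" .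
    have "ennreal 1 \<le> ennreal (1 / p k) * emeasure (K s) {s'. L s' < k}"
    proof -
      have "p k \<le> measure_pmf.prob (K s) {s'. L s' < k}" using prog[OF Is False] k_def by simp
      then have "1 \<le> (1 / p k) * measure_pmf.prob (K s) {s'. L s' < k}"
        using pk by (simp add: field_simps)
      then show ?thesis using pk
        by (simp add: measure_pmf.emeasure_eq_measure ennreal_mult[symmetric] del: ennreal_1)
    qed
    then have "(\<integral>\<^sup>+s'. f s' \<partial>K s) + 1 \<le> ennreal (h k)"
      using A by (metis add_left_mono ennreal_1 order_trans)
    then show ?thesis using False k_def unfolding f_def by simp
  qed
  have main: "(\<integral>\<^sup>+s. f s \<partial>X T) + (\<Sum>t<T. ennreal (measure_pmf.prob (X t) {s. \<not> g s})) \<le> (\<integral>\<^sup>+s. f s \<partial>X 0)" for T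
  proof (induction T)
    case 0 then show ?case by simp
  next
    case (Suc T)
    have "(\<integral>\<^sup>+s. f s \<partial>X (Suc T)) + ennreal (measure_pmf.prob (X T) {s. \<not> g s})
       = (\<integral>\<^sup>+s. (\<integral>\<^sup>+s'. f s' \<partial>(if g s then return_pmf s else K s)) \<partial>X T)
         + (\<integral>\<^sup>+s. indicator {s. \<not> g s} s \<partial>X T)"
      by (simp add: XS measure_pmf.emeasure_eq_measure[symmetric])
    also have "\<dots> = (\<integral>\<^sup>+s. (\<integral>\<^sup>+s'. f s' \<partial>(if g s then return_pmf s else K s)) + indicator {s. \<not> g s} s \<partial>X T)"
      by (subst nn_integral_add) auto
    also have "\<dots> \<le> (\<integral>\<^sup>+s. f s \<partial>X T)"
      by (intro nn_integral_mono_AE AE_pmfI drift Inv)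
    finally have "(\<integral>\<^sup>+s. f s \<partial>X (Suc T)) + ennreal (measure_pmf.prob (X T) {s. \<not> g s}) \<le> (\<integral>\<^sup>+s. f s \<partial>X T)" .
    then have "(\<integral>\<^sup>+s. f s \<partial>X (Suc T)) + (\<Sum>t<Suc T. ennreal (measure_pmf.prob (X t) {s. \<not> g s}))
        \<le> (\<integral>\<^sup>+s. f s \<partial>X T) + (\<Sum>t<T. ennreal (measure_pmf.prob (X t) {s. \<not> g s}))"
      by (simp add: add_ac add_right_mono)
    also have "\<dots> \<le> (\<integral>\<^sup>+s. f s \<partial>X 0)" using Suc.IH .
    finally show ?case .
  qed
  have f0: "(\<integral>\<^sup>+s. f s \<partial>X 0) \<le> ennreal F"
  proof -
    have "(\<integral>\<^sup>+s. f s \<partial>X 0) \<le> (\<integral>\<^sup>+s. ennreal F \<partial>X 0)"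
      by (rule nn_integral_mono) (simp add: f_def hF ennreal_leI)
    also have "\<dots> = ennreal F" by (simp add: measure_pmf.emeasure_space_1)
    finally show ?thesis .
  qed
  show ?thesis unfolding F_def[symmetric]
  proof (rule suminf_le_const)
    fix T
    have "(\<Sum>t<T. ennreal (measure_pmf.prob (X t) {s. \<not> g s})) \<le> (\<integral>\<^sup>+s. f s \<partial>X T) + (\<Sum>t<T. ennreal (measure_pmf.prob (X t) {s. \<not> g s}))"
      by simp
    also have "\<dots> \<le> ennreal F" using main[of T] f0 by simp
    finally show "(\<Sum>t<T. ennreal (measure_pmf.prob (X t) {s. \<not> g s})) \<le> ennreal F" .
  qed simp
qed



lemma measure_bind_pmf_of_set:
  assumes "finite S" "S \<noteq> {}"
  shows "measure_pmf.prob (pmf_of_set S \<bind> N) A = (\<Sum>x\<in>S. measure_pmf.prob (N x) A) / card S"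
proof -
  have "ennreal (measure_pmf.prob (pmf_of_set S \<bind> N) A) = emeasure (measure_pmf (pmf_of_set S \<bind> N)) A"
    by (simp add: measure_pmf.emeasure_eq_measure)
  also have "\<dots> = (\<Sum>x\<in>S. ennreal (measure_pmf.prob (N x) A)) / of_nat (card S)"
    unfolding emeasure_bind_pmf using assms by (simp add: nn_integral_pmf_of_set measure_pmf.emeasure_eq_measure)
  also have "\<dots> = ennreal ((\<Sum>x\<in>S. measure_pmf.prob (N x) A) / card S)"
    using assms by (simp add: sum_ennreal ennreal_of_nat_eq_real_of_nat card_gt_0_iff divide_ennreal sum_nonneg)
  finally show ?thesis by (simp add: ennreal_inj sum_nonneg divide_nonneg_nonneg)
qed

lemma measure_bind_bernoulli_half:
  "measure_pmf.prob (bernoulli_pmf (1/2) \<bind> N) A = (measure_pmf.prob (N True) A + measure_pmf.prob (N False) A) / 2"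
proof -
  have "ennreal (measure_pmf.prob (bernoulli_pmf (1/2) \<bind> N) A) = emeasure (measure_pmf (bernoulli_pmf (1/2) \<bind> N)) A"
    by (simp add: measure_pmf.emeasure_eq_measure)
  also have "\<dots> = ennreal (measure_pmf.prob (N True) A) * ennreal (1/2) + ennreal (measure_pmf.prob (N False) A) * ennreal (1/2)"
    by (simp only: emeasure_bind_pmf) (simp add: measure_pmf.emeasure_eq_measure)
  also have "\<dots> = ennreal ((measure_pmf.prob (N True) A + measure_pmf.prob (N False) A) / 2)"
    using ennreal_mult[of "measure_pmf.prob (N True) A" "1/2"] ennreal_mult[of "measure_pmf.prob (N False) A" "1/2"]
      ennreal_plus[of "measure_pmf.prob (N True) A / 2" "measure_pmf.prob (N False) A / 2"]
    by (simp add: add_divide_distrib)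
  finally show ?thesis by (simp add: ennreal_inj)
qed

lemma one_minus_pow_ge:
  assumes "n \<ge> (2::nat)"
  shows "(1 - 1 / real n) ^ (n - 1) \<ge> exp (-1)"
proof -
  define m where "m = n - 1"
  have m1: "m \<ge> 1" and nm: "real n = real m + 1" using assms by (auto simp: m_def)
  have "(1 + 1 / real m) ^ m \<le> exp (1 / real m) ^ m"
    by (intro power_mono) (auto simp: exp_ge_add_one_self add_increasing)
  also have "\<dots> = exp 1" using m1 by (simp add: exp_of_nat_mult[symmetric])
  finally have A: "(1 + 1 / real m) ^ m \<le> exp 1" .
  have B: "(1 - 1 / real n) ^ m * (1 + 1 / real m) ^ m = 1"
  proof -
    have "(1 - 1 / real n) * (1 + 1 / real m) = 1" using m1 nm by (simp add: divide_simps)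
    then show ?thesis by (metis power_mult_distrib power_one)
  qed
  have pos: "(1 + 1 / real m) ^ m > 0" by (simp add: add_pos_nonneg)
  have "(1 - 1 / real n) ^ m = 1 / (1 + 1 / real m) ^ m" using B pos by (metis less_irrefl nonzero_mult_div_cancel_right)
  also have "\<dots> \<ge> 1 / exp 1" using A pos by (intro divide_left_mono) auto
  finally show ?thesis by (simp add: m_def exp_minus field_simps)
qed



lemma pmf_Pi_ind:
  assumes "i < n" "n \<ge> 2"
  shows "pmf (Pi_pmf {..<n} False (\<lambda>_. bernoulli_pmf (1 / real n))) (\<lambda>j. j = i)
         = (1 / real n) * (1 - 1 / real n) ^ (n - 1)"
proof -
  have "pmf (Pi_pmf {..<n} False (\<lambda>_. bernoulli_pmf (1 / real n))) (\<lambda>j. j = i)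
      = (\<Prod>j\<in>{..<n}. pmf (bernoulli_pmf (1 / real n)) (j = i))"
    using assms by (subst pmf_Pi') auto
  also have "\<dots> = pmf (bernoulli_pmf (1 / real n)) True * (\<Prod>j\<in>{..<n} - {i}. pmf (bernoulli_pmf (1 / real n)) (j = i))"
    using assms by (subst prod.remove[of _ i]) auto
  also have "(\<Prod>j\<in>{..<n} - {i}. pmf (bernoulli_pmf (1 / real n)) (j = i)) = (\<Prod>j\<in>{..<n} - {i}. 1 - 1 / real n)"
    using assms by (intro prod.cong) auto
  also have "\<dots> = (1 - 1 / real n) ^ (n - 1)" using assms by simp
  finally show ?thesis using assms by simp
qed

lemma mutate_progress:
  assumes n2: "n \<ge> 2" and valid: "\<forall>i. n \<le> i \<longrightarrow> \<not> x i" and k: "ones n x \<ge> 1"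
  shows "real (ones n x) / (2 * exp 1 * real n) \<le> measure_pmf.prob (mutate n E x) {x'. ones n x' < ones n x}"
proof -
  define Q where "Q = Pi_pmf {..<n} False (\<lambda>_. bernoulli_pmf (1 / real n))"
  define fl where "fl c = (\<lambda>i. x i \<noteq> c i)" for c :: "nat \<Rightarrow> bool"
  define S where "S = {i. i < n \<and> x i}"
  define ind where "ind i = (\<lambda>j::nat. j = i)" for i
  define B where "B = {x'. ones n x' < ones n x}"
  have onesS: "ones n x = card S" unfolding ones_def S_def by simp
  have finS: "finite S" unfolding S_def by simp
  define N where "N b = Pi_pmf {..<n} False (\<lambda>i. bernoulli_pmf (if b \<and> (\<exists>e\<in>Ex E x. i \<in> e) then 1/2 else 1 / real n))
       \<bind> (\<lambda>c. return_pmf (fl c))" for b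
  have mut: "mutate n E x = bernoulli_pmf (1/2) \<bind> N"
    unfolding mutate_def N_def fl_def by simp
  have NF: "N False = map_pmf fl Q" unfolding N_def Q_def map_pmf_def by simp
  have sub: "ind ` S \<subseteq> fl -` B"
  proof
    fix c assume "c \<in> ind ` S"
    then obtain i where i: "i \<in> S" "c = ind i" by auto
    have "{j. j < n \<and> fl c j} = S - {i}" using i unfolding S_def fl_def ind_def by auto
    then have "ones n (fl c) = card S - 1" using i finS unfolding ones_def by simp
    then show "c \<in> fl -` B" using k onesS unfolding B_def by simp
  qed
  have inj: "inj_on ind S" unfolding ind_def inj_on_def by metis
  have "measure_pmf.prob Q (ind ` S) = (\<Sum>c\<in>ind ` S. pmf Q c)"
    using finS by (simp add: measure_measure_pmf_finite)
  also have "\<dots> = (\<Sum>i\<in>S. pmf Q (ind i))" using inj by (simp add: sum.reindex)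
  also have "\<dots> = (\<Sum>i\<in>S. (1 / real n) * (1 - 1 / real n) ^ (n - 1))"
    unfolding Q_def ind_def using n2 by (intro sum.cong) (auto simp: S_def pmf_Pi_ind)
  also have "\<dots> = real (card S) * ((1 / real n) * (1 - 1 / real n) ^ (n - 1))" by simp
  finally have mQ: "measure_pmf.prob Q (ind ` S) = real (card S) * ((1 / real n) * (1 - 1 / real n) ^ (n - 1))" .
  have "real (card S) * ((1 / real n) * exp (-1)) \<le> real (card S) * ((1 / real n) * (1 - 1 / real n) ^ (n - 1))"
    using one_minus_pow_ge[OF n2] n2 by (intro mult_left_mono) auto
  also have "\<dots> \<le> measure_pmf.prob Q (fl -` B)"
    unfolding mQ[symmetric] by (rule measure_pmf.finite_measure_mono[OF sub]) simp
  also have "\<dots> = measure_pmf.prob (N False) B" by (simp add: NF)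
  finally have A: "real (card S) * ((1 / real n) * exp (-1)) \<le> measure_pmf.prob (N False) B" .
  have "measure_pmf.prob (mutate n E x) B = (measure_pmf.prob (N True) B + measure_pmf.prob (N False) B) / 2"
    unfolding mut by (rule measure_bind_bernoulli_half)
  also have "\<dots> \<ge> measure_pmf.prob (N False) B / 2" by (simp add: divide_right_mono)
  finally have "measure_pmf.prob (N False) B / 2 \<le> measure_pmf.prob (mutate n E x) B" .
  moreover have "real (ones n x) / (2 * exp 1 * real n) = real (card S) * ((1 / real n) * exp (-1)) / 2"
    using onesS by (simp add: exp_minus field_simps)
  ultimately show ?thesis using A unfolding B_def by (smt (verit) divide_right_mono)
qed



definition valid :: "nat \<Rightarrow> spoint \<Rightarrow> bool" where "valid n y \<longleftrightarrow> (\<forall>i. n \<le> i \<longrightarrow> \<not> y i)"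
definition Inv :: "nat \<Rightarrow> spoint set \<Rightarrow> bool" where
  "Inv n P \<longleftrightarrow> finite P \<and> P \<noteq> {} \<and> (\<forall>y\<in>P. valid n y) \<and> (\<forall>k. card {y\<in>P. ones n y = k} \<le> 2)"
definition newpop where
  "newpop n sel1 sel2 P x' = (let P1 = insert x' P; P' = {y \<in> P1. ones n y = ones n x'} in (P1 - P') \<union> {sel1 P', sel2 P'})"
definition Lv :: "nat \<Rightarrow> spoint set \<Rightarrow> nat" where "Lv n P = Min (ones n ` P)"

lemma step_eq: "dpea_step n E sel1 sel2 P = pmf_of_set P \<bind> (\<lambda>x. map_pmf (newpop n sel1 sel2 P) (mutate n E x))"
  by (simp add: dpea_step_def newpop_def map_pmf_def Let_def)

lemma ones_le: "ones n y \<le> n"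
proof -
  have "card {i. i < n \<and> y i} \<le> card {..<n}" by (intro card_mono) auto
  then show ?thesis by (simp add: ones_def)
qed

lemma ones_zero: "valid n y \<Longrightarrow> ones n y = 0 \<longleftrightarrow> y = zero_pt"
proof -
  assume v: "valid n y"
  have fin: "finite {i. i < n \<and> y i}" by simp
  have "ones n y = 0 \<longleftrightarrow> {i. i < n \<and> y i} = {}" unfolding ones_def using fin by simp
  also have "\<dots> \<longleftrightarrow> (\<forall>i. \<not> y i)"
  proof
    assume e: "{i. i < n \<and> y i} = {}"
    show "\<forall>i. \<not> y i"
    proof
      fix i show "\<not> y i"
      proof (cases "i < n")
        case True then show ?thesis using e by blast
      next
        case False then show ?thesis using v unfolding valid_def by simp
      qed
    qed
  qed auto
  also have "\<dots> \<longleftrightarrow> y = zero_pt" unfolding zero_pt_def by (simp add: fun_eq_iff)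
  finally show ?thesis .
qed

lemma mutate_valid:
  assumes "valid n x" "x' \<in> set_pmf (mutate n E x)" shows "valid n x'"
proof -
  obtain b c where c: "c \<in> set_pmf (Pi_pmf {..<n} False
            (\<lambda>i. bernoulli_pmf (if b \<and> (\<exists>e\<in>Ex E x. i \<in> e) then 1/2 else 1 / real n)))"
    and x': "x' = (\<lambda>i. x i \<noteq> c i)"
    using assms(2) unfolding mutate_def set_bind_pmf by auto
  have "\<forall>i. i \<notin> {..<n} \<longrightarrow> c i = False" using set_Pi_pmf_subset[of "{..<n}" False] c by blast
  then show ?thesis using assms(1) x' unfolding valid_def by auto
qed

lemma card_bound:
  assumes "Inv n P" shows "card P \<le> 2 * (n + 1)"
proof -
  have fin: "finite P" using assms by (simp add: Inv_def)
  have eq: "P = (\<Union>k\<in>{..n}. {y\<in>P. ones n y = k})" using ones_le by auto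
  have F: "card (\<Union>k\<in>{..n}. {y\<in>P. ones n y = k}) \<le> (\<Sum>k\<in>{..n}. card {y\<in>P. ones n y = k})"
    by (rule card_UN_le) simp
  have "card P \<le> (\<Sum>k\<in>{..n}. card {y\<in>P. ones n y = k})"
    using F by (simp only: eq[symmetric])
  also have "\<dots> \<le> (\<Sum>k\<in>{..n}. 2)" using assms by (intro sum_mono) (simp add: Inv_def)
  finally show ?thesis by simp
qed

lemma Lv_le: "Inv n P \<Longrightarrow> y \<in> P \<Longrightarrow> Lv n P \<le> ones n y"
  unfolding Lv_def Inv_def by auto

lemma Lv_in: "Inv n P \<Longrightarrow> \<exists>y\<in>P. ones n y = Lv n P"
  unfolding Lv_def Inv_def by (metis (mono_tags, lifting) Min_in finite_imageI image_is_empty imageE)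

lemma Lv_zero: "Inv n P \<Longrightarrow> zero_pt \<in> P \<longleftrightarrow> Lv n P = 0"
proof -
  assume I: "Inv n P"
  then have fin: "finite P" "P \<noteq> {}" and v: "\<forall>y\<in>P. valid n y" by (auto simp: Inv_def)
  have "Lv n P = 0 \<longleftrightarrow> (\<exists>y\<in>P. ones n y = 0)"
    using Lv_in[OF I] Lv_le[OF I] by (metis le_zero_eq)
  also have "\<dots> \<longleftrightarrow> zero_pt \<in> P" using v ones_zero by auto
  finally show ?thesis by simp
qed

context
  fixes n :: nat and sel1 sel2 :: "spoint set \<Rightarrow> spoint"
  assumes s1: "\<forall>S. finite S \<and> S \<noteq> {} \<longrightarrow> sel1 S \<in> S"
  and s2: "\<forall>S. finite S \<and> S \<noteq> {} \<longrightarrow> sel2 S \<in> S"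
begin

lemma newpop_props:
  assumes I: "Inv n P"
  shows "Inv n (newpop n sel1 sel2 P x') \<or> \<not> valid n x'"
    and "Lv n (newpop n sel1 sel2 P x') \<le> Lv n P"
    and "Lv n (newpop n sel1 sel2 P x') \<le> ones n x'"
proof -
  define P1 where "P1 = insert x' P"
  define P' where "P' = {y \<in> P1. ones n y = ones n x'}"
  have fin: "finite P" and ne: "P \<noteq> {}" using I by (auto simp: Inv_def)
  have finP': "finite P'" "P' \<noteq> {}" unfolding P'_def P1_def using fin by auto
  have m1: "sel1 P' \<in> P'" and m2: "sel2 P' \<in> P'" using s1 s2 finP' by auto
  have Q: "newpop n sel1 sel2 P x' = (P1 - P') \<union> {sel1 P', sel2 P'}"
    unfolding newpop_def P1_def P'_def Let_def by simp
  define Q where "Q = (P1 - P') \<union> {sel1 P', sel2 P'}"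
  have finQ: "finite Q" "Q \<noteq> {}" unfolding Q_def P1_def using fin by auto
  have IQ: "Inv n Q" if vx: "valid n x'"
  proof -
    have "Q \<subseteq> P1" unfolding Q_def using m1 m2 P'_def by auto
    then have v: "\<forall>y\<in>Q. valid n y" using I vx unfolding P1_def Inv_def by auto
    have "card {y\<in>Q. ones n y = k} \<le> 2" for k
    proof (cases "k = ones n x'")
      case True
      have "{y\<in>Q. ones n y = k} \<subseteq> {sel1 P', sel2 P'}" unfolding Q_def P'_def using True by auto
      then have "card {y\<in>Q. ones n y = k} \<le> card {sel1 P', sel2 P'}" by (intro card_mono) auto
      also have "\<dots> \<le> 2" by (simp add: card_insert_le_m1)
      finally show ?thesis .
    next
      case False
      have o1: "ones n (sel1 P') = ones n x'" and o2: "ones n (sel2 P') = ones n x'"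
        using m1 m2 unfolding P'_def by auto
      have mem: "y \<in> P' \<longleftrightarrow> y \<in> P1 \<and> ones n y = ones n x'" for y by (simp add: P'_def)
      have "{y\<in>Q. ones n y = k} = {y\<in>P. ones n y = k}"
        unfolding Q_def P1_def using False o1 o2 mem unfolding P1_def by auto
      then show ?thesis using I by (simp add: Inv_def)
    qed
    then show ?thesis using finQ v unfolding Inv_def by blast
  qed
  then show "Inv n (newpop n sel1 sel2 P x') \<or> \<not> valid n x'" using Q Q_def by auto
  have IQ': "Lv n Q \<le> ones n y" if "y \<in> Q" for y
    unfolding Lv_def using finQ that by auto
  obtain y0 where y0: "y0 \<in> P" "ones n y0 = Lv n P" using Lv_in[OF I] by blast
  show "Lv n (newpop n sel1 sel2 P x') \<le> Lv n P"
  proof (cases "ones n y0 = ones n x'")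
    case True
    have "sel1 P' \<in> Q" unfolding Q_def by simp
    moreover have "ones n (sel1 P') = ones n x'" using m1 unfolding P'_def by simp
    ultimately show ?thesis using IQ' Q Q_def y0 True by metis
  next
    case False
    have "y0 \<in> Q" unfolding Q_def P'_def P1_def using y0 False by auto
    then show ?thesis using IQ' Q Q_def y0 by metis
  qed
  have "sel1 P' \<in> Q" unfolding Q_def by simp
  moreover have "ones n (sel1 P') = ones n x'" using m1 unfolding P'_def by simp
  ultimately show "Lv n (newpop n sel1 sel2 P x') \<le> ones n x'" using IQ' Q Q_def by metis
qed

end



lemma harm_le_ln: "n \<ge> 1 \<Longrightarrow> (\<Sum>k=1..n. 1 / real k) \<le> 1 + ln (real n)"
proof (induction n rule: dec_induct)
  case base then show ?case by simp
next
  case (step m)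
  have m: "real m \<ge> 1" using step by simp
  have "ln (real m / (real m + 1)) \<le> real m / (real m + 1) - 1"
    using m by (intro ln_le_minus_one) auto
  also have "\<dots> = - (1 / (real m + 1))" using m by (simp add: field_simps)
  finally have "1 / (real m + 1) \<le> ln (real m + 1) - ln (real m)"
    using m by (simp add: ln_div)
  then show ?case using step.IH by (simp add: add.commute)
qed

lemma main_bound:
  assumes n2: "n \<ge> (2::nat)"
  shows "(\<Sum>k=1..n. 1 / (real k / (4 * exp 1 * real n * (real n + 1)))) \<le> 100 * real n ^ 2 * ln (real n)"
proof -
  define c where "c = 4 * exp 1 * real n * (real n + 1)"
  have c0: "c > 0" unfolding c_def using n2 by simp
  have "(\<Sum>k=1..n. 1 / (real k / c)) = c * (\<Sum>k=1..n. 1 / real k)"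
    by (simp add: sum_distrib_left)
  also have "\<dots> \<le> c * (1 + ln (real n))"
    using c0 harm_le_ln[of n] n2 by (intro mult_left_mono) auto
  also have "\<dots> \<le> (4 * 3 * real n * (2 * real n)) * (5/2 * ln (real n))"
  proof (rule mult_mono)
    show "c \<le> 4 * 3 * real n * (2 * real n)"
      unfolding c_def using e_less_272 n2 by (intro mult_mono) auto
    have "ln 2 \<le> ln (real n)" using n2 by simp
    then show "1 + ln (real n) \<le> 5/2 * ln (real n)" using ln2_ge_two_thirds by simp
    show "0 \<le> 4 * 3 * real n * (2 * real n)" by simp
    have "0 \<le> ln (real n)" using n2 by simp
    then show "0 \<le> 1 + ln (real n)" by simp
  qed
  also have "\<dots> \<le> 100 * real n ^ 2 * ln (real n)"
  proof -
    have "0 \<le> ln (real n)" using n2 by simp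
    then show ?thesis by (simp add: power2_eq_square mult_right_mono)
  qed
  finally show ?thesis unfolding c_def .
qed

theorem lemma9:
  "\<exists>C::real. \<forall>n::nat. \<forall>E w sel1 sel2. n \<ge> 2 \<longrightarrow> wvc_graph n E w \<longrightarrow>
     is_selector (\<lambda>z. cost n w z + LP n E w z) sel1 \<longrightarrow>
     is_selector (\<lambda>z. cost n w z + 2 * LP n E w z) sel2 \<longrightarrow>
     expected_time_zero n E sel1 sel2 \<le> ennreal (C * real n ^ 2 * ln (real n))"
proof (intro exI allI impI)
  fix n :: nat and E w and sel1 sel2 :: "spoint set \<Rightarrow> spoint"
  assume n2: "n \<ge> 2"
    and is1: "is_selector (\<lambda>z. cost n w z + LP n E w z) sel1"
    and is2: "is_selector (\<lambda>z. cost n w z + 2 * LP n E w z) sel2"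
  have s1: "\<forall>S. finite S \<and> S \<noteq> {} \<longrightarrow> sel1 S \<in> S" using is1 unfolding is_selector_def by blast
  have s2: "\<forall>S. finite S \<and> S \<noteq> {} \<longrightarrow> sel2 S \<in> S" using is2 unfolding is_selector_def by blast
  define p where "p k = real k / (4 * exp 1 * real n * (real n + 1))" for k :: nat
  have FL: "(\<Sum>t. ennreal (measure_pmf.prob (dpea_pop n E sel1 sel2 t) {s. \<not> zero_pt \<in> s}))
      \<le> ennreal (\<Sum>k=1..n. 1 / p k)"
  proof (rule fitness_levels[where I = "Inv n" and K = "dpea_step n E sel1 sel2" and L = "Lv n"])
    show "\<And>t. dpea_pop n E sel1 sel2 (Suc t) = dpea_pop n E sel1 sel2 t \<bind>
        (\<lambda>s. if zero_pt \<in> s then return_pmf s else dpea_step n E sel1 sel2 s)" by simp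
  next
    fix s assume "s \<in> set_pmf (dpea_pop n E sel1 sel2 0)"
    then obtain x where x: "x \<in> set_pmf (init_pt n)" "s = {x}" by auto
    have "\<forall>i. i \<notin> {..<n} \<longrightarrow> x i = False"
      using set_Pi_pmf_subset[of "{..<n}" False] x unfolding init_pt_def by blast
    then have v: "valid n x" unfolding valid_def by auto
    have "card {y\<in>{x}. ones n y = k} \<le> 2" for k
    proof -
      have "card {y\<in>{x}. ones n y = k} \<le> card {x}" by (intro card_mono) auto
      then show ?thesis by simp
    qed
    then show "Inv n s" using v x unfolding Inv_def by auto
  next
    fix s s' assume I: "Inv n s" and ng: "\<not> zero_pt \<in> s" and s': "s' \<in> set_pmf (dpea_step n E sel1 sel2 s)"
    have fin: "finite s" "s \<noteq> {}" using I by (auto simp: Inv_def)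
    from s' obtain x x' where x: "x \<in> s" and x': "x' \<in> set_pmf (mutate n E x)"
      and s'eq: "s' = newpop n sel1 sel2 s x'"
      unfolding step_eq using fin by (auto simp: set_bind_pmf)
    have "valid n x" using I x by (auto simp: Inv_def)
    then have "valid n x'" using mutate_valid x' by blast
    then show "Inv n s' \<and> Lv n s' \<le> Lv n s"
      using newpop_props[OF s1 s2 I, of x'] s'eq by auto
  next
    fix s assume I: "Inv n s"
    obtain y where "y \<in> s" "ones n y = Lv n s" using Lv_in[OF I] by blast
    then show "Lv n s \<le> n" using ones_le by metis
  next
    fix s assume "Inv n s" then show "zero_pt \<in> s \<longleftrightarrow> Lv n s = 0" by (rule Lv_zero)
  next
    fix s assume I: "Inv n s" and ng: "\<not> zero_pt \<in> s"
    define k where "k = Lv n s"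
    have k1: "k \<ge> 1" using Lv_zero[OF I] ng k_def by simp
    have fin: "finite s" "s \<noteq> {}" using I by (auto simp: Inv_def)
    obtain y0 where y0: "y0 \<in> s" "ones n y0 = k" using Lv_in[OF I] k_def by blast
    have vy0: "valid n y0" using I y0 by (auto simp: Inv_def)
    define A where "A = {s'. Lv n s' < k}"
    define new where "new = newpop n sel1 sel2 s"
    have cardpos: "real (card s) > 0" using fin by (simp add: card_gt_0_iff)
    have cardle: "real (card s) \<le> 2 * (real n + 1)" proof -
      have "real (card s) \<le> real (2 * (n + 1))" using card_bound[OF I] by (simp only: of_nat_le_iff)
      then show ?thesis by simp
    qed
    have "real k / (2 * exp 1 * real n) \<le> measure_pmf.prob (mutate n E y0) {x'. ones n x' < ones n y0}"
      using mutate_progress[OF n2, of y0 E] vy0 y0 k1 unfolding valid_def by simp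
    also have "\<dots> \<le> measure_pmf.prob (mutate n E y0) (new -` A)"
    proof (rule measure_pmf.finite_measure_mono)
      show "{x'. ones n x' < ones n y0} \<subseteq> new -` A"
        using newpop_props(3)[OF s1 s2 I] y0 unfolding A_def new_def by (auto intro: le_less_trans)
    qed simp
    also have "\<dots> = measure_pmf.prob (map_pmf new (mutate n E y0)) A" by simp
    also have "\<dots> \<le> (\<Sum>x\<in>s. measure_pmf.prob (map_pmf new (mutate n E x)) A)"
      using y0 fin by (intro member_le_sum) auto
    finally have B: "real k / (2 * exp 1 * real n) \<le> (\<Sum>x\<in>s. measure_pmf.prob (map_pmf new (mutate n E x)) A)" .
    have "p k = (real k / (2 * exp 1 * real n)) / (2 * (real n + 1))"
      unfolding p_def by (simp add: field_simps)
    also have "\<dots> \<le> (real k / (2 * exp 1 * real n)) / real (card s)"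
      using cardpos cardle by (intro divide_left_mono) auto
    also have "\<dots> \<le> (\<Sum>x\<in>s. measure_pmf.prob (map_pmf new (mutate n E x)) A) / real (card s)"
      using B cardpos by (intro divide_right_mono) auto
    also have "\<dots> = measure_pmf.prob (dpea_step n E sel1 sel2 s) A"
      unfolding step_eq new_def using fin by (simp add: measure_bind_pmf_of_set)
    finally show "p (Lv n s) \<le> measure_pmf.prob (dpea_step n E sel1 sel2 s) {s'. Lv n s' < Lv n s}"
      unfolding A_def k_def .
  next
    fix k :: nat assume "1 \<le> k" "k \<le> n"
    then show "p k > 0" unfolding p_def using n2 by simp
  qed
  have "expected_time_zero n E sel1 sel2 \<le> ennreal (\<Sum>k=1..n. 1 / p k)"
    using FL unfolding expected_time_zero_def by simp
  also have "\<dots> \<le> ennreal (100 * real n ^ 2 * ln (real n))"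
    using main_bound[OF n2] unfolding p_def by (rule ennreal_leI)
  finally show "expected_time_zero n E sel1 sel2 \<le> ennreal (100 * real n ^ 2 * ln (real n))" .
qed

end
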